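(* Let $\Gamma$ be a connected, undirected graph without loops on $n$ nodes with Laplacian $\mathbf L=\mathbf K-\mathbf A$, and let $\phi_1,\dots,\phi_n$ be an orthonormal basis of eigenvectors of $\mathbf L$ with $\mathbf L\phi_i=\mu_i\phi_i$. Let $$\mathbf G=\begin{bmatrix}\mathbf 0&\mathbf I\\-\mathbf I&-\mathbf L\end{bmatrix},\qquad \mathbf P=(\mathbf G^T\mathbf G)^{1/2}$$ (the positive definite square root). Then the eigenvalues of $\mathbf P$ are the $n$ pairs of reciprocal values $$\lambda_i^{P\pm}=\tfrac12\Big[\sqrt{\mu_i^2+4}\pm\mu_i\Big],\quad i=1,\dots,n,$$ with corresponding normalized eigenvectors $$\psi_i^{P\pm}=\frac{1}{\sqrt{1+(\lambda_i^{P\pm})^2}}\begin{bmatrix}\phi_i\\ \pm\lambda_i^{P\pm}\phi_i\end{bmatrix}.$$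
   Context: $\mathbf A$ is the adjacency matrix, $\mathbf K$ the diagonal degree matrix, $\mathbf I,\mathbf 0$ the $n\times n$ identity and zero matrices. *)

theory Defs
  imports "HOL-Analysis.Analysis"
begin

definition simple_adj :: "real^'n^'n \<Rightarrow> bool" where
  "simple_adj A \<longleftrightarrow> (\<forall>i j. A$i$j = A$j$i) \<and> (\<forall>i j. A$i$j = 0 \<or> A$i$j = 1) \<and> (\<forall>i. A$i$i = 0)"

definition adj_connected :: "real^'n^'n \<Rightarrow> bool" where
  "adj_connected A \<longleftrightarrow> (\<forall>u v. (\<lambda>a b. A$a$b = 1)\<^sup>*\<^sup>* u v)"

definition degree_mat :: "real^'n^'n \<Rightarrow> real^'n^'n" where
  "degree_mat A = (\<chi> i j. if i = j then (\<Sum>k\<in>UNIV. A$i$k) else 0)"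

definition laplacian :: "real^'n^'n \<Rightarrow> real^'n^'n" where
  "laplacian A = degree_mat A - A"

text \<open>The 2n x 2n block matrix G = [[0, I], [-I, -L]], indexed by 'n + 'n
  (Inl = first block, Inr = second block).\<close>
definition Gmat :: "real^'n^'n \<Rightarrow> real^('n+'n)^('n+'n)" where
  "Gmat L = (\<chi> r c. case (r, c) of
      (Inl i, Inl j) \<Rightarrow> 0
    | (Inl i, Inr j) \<Rightarrow> (if i = j then 1 else 0)
    | (Inr i, Inl j) \<Rightarrow> (if i = j then -1 else 0)
    | (Inr i, Inr j) \<Rightarrow> - L$i$j)"

definition pos_def_mat :: "real^'m^'m \<Rightarrow> bool" where
  "pos_def_mat P \<longleftrightarrow> transpose P = P \<and> (\<forall>x. x \<noteq> 0 \<longrightarrow> x \<bullet> (P *v x) > 0)"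

definition sgn_pm :: "bool \<Rightarrow> real" where
  "sgn_pm s = (if s then 1 else -1)"

definition lamP :: "bool \<Rightarrow> real \<Rightarrow> real" where
  "lamP s \<mu> = (sqrt (\<mu>\<^sup>2 + 4) + sgn_pm s * \<mu>) / 2"

definition psiP :: "bool \<Rightarrow> real \<Rightarrow> real^'n \<Rightarrow> real^('n+'n)" where
  "psiP s \<mu> \<phi> = (1 / sqrt (1 + (lamP s \<mu>)\<^sup>2)) *\<^sub>R
     (\<chi> k. case k of Inl j \<Rightarrow> \<phi>$j | Inr j \<Rightarrow> sgn_pm s * lamP s \<mu> * \<phi>$j)"

end

theory Submission
  imports Defs
begin

lemma sum_UNIV_plus: "(\<Sum>k\<in>(UNIV::('a::finite+'b::finite) set). f k) = (\<Sum>j\<in>UNIV. f (Inl j)) + (\<Sum>j\<in>UNIV. f (Inr j))"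
proof -
  have "(\<Sum>k\<in>(UNIV::('a+'b) set). f k) = sum f (range Inl) + sum f (range Inr)"
    by (subst UNIV_sum, rule sum.union_disjoint) auto
  also have "\<dots> = (\<Sum>j\<in>UNIV. f (Inl j)) + (\<Sum>j\<in>UNIV. f (Inr j))"
    by (simp add: sum.reindex)
  finally show ?thesis .
qed

lemma sum_delta_mult[simp]: fixes a :: "'a::finite" shows
  "(\<Sum>j\<in>UNIV. (if a = j then c else 0) * (f j::real)) = c * f a"
  "(\<Sum>j\<in>UNIV. (if j = a then c else 0) * (f j::real)) = c * f a"
  proof -
  have "\<And>j. (if a = j then c else 0) * (f j::real) = (if a = j then c * f a else 0)" by simp
  then show "(\<Sum>j\<in>UNIV. (if a = j then c else 0) * (f j::real)) = c * f a" by simp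
  have "\<And>j. (if j = a then c else 0) * (f j::real) = (if a = j then c * f a else 0)" by auto
  then show "(\<Sum>j\<in>UNIV. (if j = a then c else 0) * (f j::real)) = c * f a" by simp
qed

definition blk :: "real^'n \<Rightarrow> real^'n \<Rightarrow> real^('n+'n)" where
  "blk x y = (\<chi> k. case k of Inl j \<Rightarrow> x$j | Inr j \<Rightarrow> y$j)"

lemma blk_nth[simp]: "blk x y $ Inl j = x$j" "blk x y $ Inr j = y$j"
  by (simp_all add: blk_def)

lemma blk_inner: "blk x y \<bullet> blk x' y' = x \<bullet> x' + y \<bullet> y'"
  by (simp add: inner_vec_def sum_UNIV_plus)

lemma blk_eq0: "blk x y = 0 \<longleftrightarrow> x = 0 \<and> y = 0"
  by (auto simp: vec_eq_iff blk_def split: sum.splits)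

lemma blk_scale: "c *\<^sub>R blk x y = blk (c *\<^sub>R x) (c *\<^sub>R y)"
  by (auto simp: vec_eq_iff blk_def split: sum.splits)

lemma blk_all: "v = blk (\<chi> j. v $ Inl j) (\<chi> j. v $ Inr j)"
  by (auto simp: vec_eq_iff blk_def split: sum.splits)

lemma G_mul: "Gmat L *v blk x y = blk y (- x - L *v y)"
  apply (rule vec_eq_iff[THEN iffD2], rule allI, case_tac i)
  by (simp_all add: Gmat_def matrix_vector_mult_def sum_UNIV_plus sum_negf)

lemma GT_mul: "transpose (Gmat L) *v blk x y = blk (- y) (x - transpose L *v y)"
  apply (rule vec_eq_iff[THEN iffD2], rule allI, case_tac i)
  by (simp_all add: Gmat_def matrix_vector_mult_def transpose_def sum_UNIV_plus sum_negf)

lemma pd_sym_inner: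
  assumes "pos_def_mat P" shows "(P *v x) \<bullet> y = x \<bullet> (P *v y)"
proof -
  have "P *v x = x v* P" using assms unfolding pos_def_mat_def
    by (metis transpose_matrix_vector)
  then show ?thesis by (simp add: dot_lmul_matrix)
qed

lemma pd_sqrt_eig:
  fixes P :: "real^'m^'m"
  assumes pd: "pos_def_mat P" and sq: "(P ** P) *v w = (l^2) *\<^sub>R w" and l: "l > 0"
  shows "P *v w = l *\<^sub>R w"
proof (rule ccontr)
  define u where "u = P *v w - l *\<^sub>R w"
  assume "P *v w \<noteq> l *\<^sub>R w"
  then have u0: "u \<noteq> 0" by (simp add: u_def)
  have "P *v u = (P ** P) *v w - l *\<^sub>R (P *v w)"
    by (simp add: u_def matrix_vector_mult_diff_distrib matrix_vector_mult_scaleR matrix_vector_mul_assoc)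
  also have "\<dots> = - l *\<^sub>R u" using sq by (simp add: u_def algebra_simps power2_eq_square)
  finally have "u \<bullet> (P *v u) = - l * (u \<bullet> u)" by simp
  moreover have "u \<bullet> u > 0" using u0 by simp
  ultimately have "u \<bullet> (P *v u) < 0" using l by (simp add: mult_pos_pos)
  moreover have "u \<bullet> (P *v u) > 0" using pd u0 unfolding pos_def_mat_def by blast
  ultimately show False by simp
qed

lemma orthonormal_span0:
  fixes \<phi> :: "'n::finite \<Rightarrow> real^'n"
  assumes on: "\<And>i j. \<phi> i \<bullet> \<phi> j = (if i = j then 1 else 0)"
    and x: "\<And>i. x \<bullet> \<phi> i = 0"
  shows "x = 0"
proof -
  have inj: "inj \<phi>"
  proof (rule injI)
    fix i j assume "\<phi> i = \<phi> j"
    then have "\<phi> i \<bullet> \<phi> j = 1" using on[of j j] by simp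
    then show "i = j" using on[of i j] by (auto split: if_splits)
  qed
  have ind: "independent (range \<phi>)"
  proof (rule pairwise_orthogonal_independent)
    show "pairwise orthogonal (range \<phi>)"
      unfolding pairwise_def orthogonal_def using on by auto
    show "0 \<notin> range \<phi>" using on by (auto) (metis inner_zero_left zero_neq_one)
  qed
  have "card (range \<phi>) = CARD('n)" using inj by (simp add: card_image)
  then have "dim (UNIV :: (real^'n) set) \<le> card (range \<phi>)" by simp
  then have "UNIV \<subseteq> span (range \<phi>)"
    using card_ge_dim_independent[OF _ ind] by blast
  then have "orthogonal x x"
    using orthogonal_to_span[of x "range \<phi>" x] x unfolding orthogonal_def by auto
  then show ?thesis by (simp add: orthogonal_self)
qed

lemma lamP_pos: "lamP s m > 0"
proof -
  have "\<bar>m\<bar> < sqrt (m^2 + 4)"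
    by (metis real_sqrt_abs real_sqrt_less_iff add_strict_increasing2 less_add_same_cancel1 zero_less_numeral zero_le_power2 order_refl)
  then show ?thesis unfolding lamP_def sgn_pm_def by (auto simp: abs_less_iff)
qed

lemma lamP_quad: "(lamP s m)^2 = 1 + sgn_pm s * m * lamP s m"
proof -
  have r: "(sqrt (m^2+4))^2 = m^2 + 4" by simp
  show ?thesis unfolding lamP_def sgn_pm_def using r
    by (auto simp: power2_eq_square field_simps)
qed

lemma lamP_prod: "lamP True m * lamP False m = 1"
proof -
  have r: "(sqrt (m^2+4))^2 = m^2 + 4" by simp
  show ?thesis unfolding lamP_def sgn_pm_def using r
    by (auto simp: power2_eq_square field_simps)
qed

lemma lamP_sum: "lamP True m + lamP False m > 0"
  using lamP_pos[of True m] lamP_pos[of False m] by simp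

lemma sgn_sq: "sgn_pm s * sgn_pm s = 1" by (simp add: sgn_pm_def)

lemma psiP_blk: "psiP s m \<phi> = (1 / sqrt (1 + (lamP s m)\<^sup>2)) *\<^sub>R blk \<phi> ((sgn_pm s * lamP s m) *\<^sub>R \<phi>)"
  unfolding psiP_def blk_def by (auto simp: vec_eq_iff split: sum.splits)

theorem proposition5:
  fixes A :: "real^'n^'n"
    and \<phi> :: "'n \<Rightarrow> real^'n" and \<mu> :: "'n \<Rightarrow> real"
    and P :: "real^('n+'n)^('n+'n)"
  assumes "simple_adj A" and "adj_connected A"
    and "\<And>i j. \<phi> i \<bullet> \<phi> j = (if i = j then 1 else 0)"
    and "\<And>i. laplacian A *v \<phi> i = \<mu> i *\<^sub>R \<phi> i"
    and "pos_def_mat P"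
    and "P ** P = transpose (Gmat (laplacian A)) ** Gmat (laplacian A)"
  shows "{c. \<exists>v. v \<noteq> 0 \<and> P *v v = c *\<^sub>R v} = {lamP s (\<mu> i) | s i. True}
    \<and> (\<forall>i. lamP True (\<mu> i) * lamP False (\<mu> i) = 1)
    \<and> (\<forall>s i. P *v psiP s (\<mu> i) (\<phi> i) = lamP s (\<mu> i) *\<^sub>R psiP s (\<mu> i) (\<phi> i))
    \<and> (\<forall>s i. norm (psiP s (\<mu> i) (\<phi> i)) = 1)
    \<and> (\<forall>s i t j. (s, i) \<noteq> (t, j) \<longrightarrow> psiP s (\<mu> i) (\<phi> i) \<bullet> psiP t (\<mu> j) (\<phi> j) = 0)"
proof -
  note on = assms(3)
  define L where "L = laplacian A"
  have Lsym: "transpose L = L"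
    using assms(1) unfolding L_def laplacian_def degree_mat_def simple_adj_def
    by (auto simp: vec_eq_iff transpose_def)
  have Lphi: "\<And>i. L *v \<phi> i = \<mu> i *\<^sub>R \<phi> i" using assms(4) by (simp add: L_def)
  define w where "w s i = blk (\<phi> i) ((sgn_pm s * lamP s (\<mu> i)) *\<^sub>R \<phi> i)" for s i
  define cc where "cc s i = 1 / sqrt (1 + (lamP s (\<mu> i))\<^sup>2)" for s i
  have psi: "psiP s (\<mu> i) (\<phi> i) = cc s i *\<^sub>R w s i" for s i
    by (simp add: psiP_blk cc_def w_def)
  have Pw: "P *v w s i = lamP s (\<mu> i) *\<^sub>R w s i" for s i
  proof (rule pd_sqrt_eig[OF assms(5) _ lamP_pos])
    define l where "l = lamP s (\<mu> i)"
    define \<sigma> where "\<sigma> = sgn_pm s"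
    have q: "l^2 = 1 + \<sigma> * \<mu> i * l" unfolding l_def \<sigma>_def by (rule lamP_quad)
    have ss: "\<sigma> * \<sigma> = 1" unfolding \<sigma>_def by (rule sgn_sq)
    have e1: "1 + \<sigma> * l * \<mu> i = l^2" using q by (simp add: algebra_simps)
    have e2: "\<sigma> * l + \<mu> i + \<sigma> * l * (\<mu> i)^2 = l^2 * (\<sigma> * l)"
    proof -
      have "l^2 * (\<sigma> * l) = \<sigma> * l * (1 + \<sigma> * \<mu> i * l)" using q by (simp add: power2_eq_square)
      also have "\<dots> = \<sigma> * l + (\<sigma> * \<sigma>) * \<mu> i * l^2" by (simp add: algebra_simps power2_eq_square)
      also have "\<dots> = \<sigma> * l + \<mu> i * (1 + \<sigma> * \<mu> i * l)" using ss q by simp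
      finally show ?thesis by (simp add: algebra_simps power2_eq_square)
    qed
    have neg: "\<And>x. L *v - x = - (L *v x)" by (metis matrix_vector_mult_scaleR scaleR_minus1_left)
    have "(P ** P) *v w s i = transpose (Gmat L) *v (Gmat L *v w s i)"
      using assms(6) by (simp add: L_def matrix_vector_mul_assoc)
    also have "\<dots> = blk ((1 + \<sigma> * l * \<mu> i) *\<^sub>R \<phi> i) ((\<sigma> * l + \<mu> i + \<sigma> * l * (\<mu> i)^2) *\<^sub>R \<phi> i)"
      unfolding w_def G_mul GT_mul Lsym
      by (simp add: Lphi matrix_vector_mult_diff_distrib matrix_vector_mult_scaleR
          l_def \<sigma>_def algebra_simps power2_eq_square matrix_vector_right_distrib neg)
    also have "\<dots> = l^2 *\<^sub>R w s i"
      unfolding e1 e2 w_def blk_scale by (simp add: l_def \<sigma>_def)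
    finally show "(P ** P) *v w s i = (lamP s (\<mu> i))^2 *\<^sub>R w s i" by (simp add: l_def)
  qed
  have Ppsi: "P *v psiP s (\<mu> i) (\<phi> i) = lamP s (\<mu> i) *\<^sub>R psiP s (\<mu> i) (\<phi> i)" for s i
    unfolding psi by (simp add: matrix_vector_mult_scaleR Pw)
  have winner: "w s i \<bullet> w t j = (if i = j then 1 + sgn_pm s * lamP s (\<mu> i) * (sgn_pm t * lamP t (\<mu> j)) else 0)" for s i t j
    unfolding w_def blk_inner by (simp add: on)
  have nrm: "norm (psiP s (\<mu> i) (\<phi> i)) = 1" for s i
  proof -
    have pos: "1 + (lamP s (\<mu> i))\<^sup>2 > 0" by (simp add: add_pos_nonneg)
    have "psiP s (\<mu> i) (\<phi> i) \<bullet> psiP s (\<mu> i) (\<phi> i) = (cc s i)^2 * (1 + (lamP s (\<mu> i))\<^sup>2)"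
      unfolding psi by (simp add: winner power2_eq_square algebra_simps sgn_sq)
    also have "\<dots> = 1" unfolding cc_def using pos
      by (simp add: power_divide)
    finally show ?thesis by (simp add: norm_eq_1)
  qed
  have orth: "psiP s (\<mu> i) (\<phi> i) \<bullet> psiP t (\<mu> j) (\<phi> j) = 0" if "(s, i) \<noteq> (t, j)" for s i t j
  proof (cases "i = j")
    case False then show ?thesis unfolding psi by (simp add: winner)
  next
    case True
    then have "s \<noteq> t" using that by simp
    then have "1 + sgn_pm s * lamP s (\<mu> i) * (sgn_pm t * lamP t (\<mu> i)) = 0"
      using lamP_prod[of "\<mu> i"] by (cases s; cases t; simp add: sgn_pm_def algebra_simps)
    then show ?thesis unfolding psi using True by (simp add: winner)
  qed
  have eig: "{c. \<exists>v. v \<noteq> 0 \<and> P *v v = c *\<^sub>R v} = {lamP s (\<mu> i) | s i. True}"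
  proof (intro equalityI subsetI)
    fix c assume "c \<in> {lamP s (\<mu> i) | s i. True}"
    then obtain s i where c: "c = lamP s (\<mu> i)" by blast
    have "psiP s (\<mu> i) (\<phi> i) \<noteq> 0" using nrm[of s i] by auto
    then show "c \<in> {c. \<exists>v. v \<noteq> 0 \<and> P *v v = c *\<^sub>R v}" using Ppsi c by blast
  next
    fix c assume "c \<in> {c. \<exists>v. v \<noteq> 0 \<and> P *v v = c *\<^sub>R v}"
    then obtain v where v0: "v \<noteq> 0" and Pv: "P *v v = c *\<^sub>R v" by blast
    have key: "c * (v \<bullet> w s i) = lamP s (\<mu> i) * (v \<bullet> w s i)" for s i
    proof -
      have "c * (v \<bullet> w s i) = (P *v v) \<bullet> w s i" by (simp add: Pv)
      also have "\<dots> = v \<bullet> (P *v w s i)" by (rule pd_sym_inner[OF assms(5)])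
      also have "\<dots> = lamP s (\<mu> i) * (v \<bullet> w s i)" by (simp add: Pw)
      finally show ?thesis .
    qed
    show "c \<in> {lamP s (\<mu> i) | s i. True}"
    proof (rule ccontr)
      assume nc: "c \<notin> {lamP s (\<mu> i) | s i. True}"
      have z: "v \<bullet> w s i = 0" for s i
      proof -
        have "c \<noteq> lamP s (\<mu> i)" using nc by blast
        then show ?thesis using key[of s i] by simp
      qed
      define x where "x = (\<chi> j. v $ Inl j)"
      define y where "y = (\<chi> j. v $ Inr j)"
      have vb: "v = blk x y" unfolding x_def y_def by (rule blk_all)
      have xy: "x \<bullet> \<phi> i = 0 \<and> y \<bullet> \<phi> i = 0" for i
      proof -
        have a: "x \<bullet> \<phi> i + lamP True (\<mu> i) * (y \<bullet> \<phi> i) = 0"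
          using z[of True i] unfolding vb w_def blk_inner by (simp add: sgn_pm_def)
        have b: "x \<bullet> \<phi> i - lamP False (\<mu> i) * (y \<bullet> \<phi> i) = 0"
          using z[of False i] unfolding vb w_def blk_inner by (simp add: sgn_pm_def)
        have "(lamP True (\<mu> i) + lamP False (\<mu> i)) * (y \<bullet> \<phi> i) = 0"
          using a b by (simp add: algebra_simps)
        then have "y \<bullet> \<phi> i = 0" using lamP_sum[of "\<mu> i"] by simp
        then show ?thesis using a by simp
      qed
      have "x = 0" by (rule orthonormal_span0[OF on]) (use xy in blast)
      moreover have "y = 0" by (rule orthonormal_span0[OF on]) (use xy in blast)
      ultimately have "v = 0" using vb blk_eq0 by metis
      then show False using v0 by simp
    qed
  qed
  show ?thesis using eig lamP_prod Ppsi nrm orth by blast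
qed

end
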